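(* For $\theta>0$ and $1\le q<\infty$, the small Lebesgue sequence space $l^{q)',\theta}$ is a Banach space.
   Context: Let $X$ be one of $\mathbb N,\mathbb N_0,\mathbb Z$. For $\theta>0$ and $1\le q<\infty$, the small Lebesgue sequence space $l^{q)',\theta}$ is the space of all sequences $y=\{y_k\}_{k\in X}$ such that $$\|y\|_{l^{q)',\theta}}:=\inf\Big\{\sum_{j\in X}\inf_{\varepsilon>0}\varepsilon^{\frac{-\theta}{q(1+\varepsilon)}}\Big(\sum_{k\in X}y_{k,j}^{(q(1+\varepsilon))'}\Big)^{\frac{1}{(q(1+\varepsilon))'}}\Big\}<\infty,$$ where the outer infimum is over all decompositions $|y_k|=\sum_{j\in X}y_{k,j}$ ($k\in X$) with all $y_{k,j}\ge0$, and $(q(1+\varepsilon))'$ is the conjugate exponent of $q(1+\varepsilon)$. *)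

theory Defs
  imports "HOL-Analysis.Analysis"
begin

text \<open>Sequences are real-valued functions on int, supported on the index set X,
  where X is one of N = {1..}, N0 = {0..}, Z = UNIV.\<close>

definition conj_exp :: "real \<Rightarrow> real" where
  "conj_exp p = p / (p - 1)"

definition enn_powr :: "ennreal \<Rightarrow> real \<Rightarrow> ennreal" where
  "enn_powr s r = (if s = \<infinity> then \<infinity> else ennreal (enn2real s powr r))"

definition lconj_norm :: "int set \<Rightarrow> real \<Rightarrow> (int \<Rightarrow> real) \<Rightarrow> ennreal" where
  "lconj_norm X p z =
     enn_powr (\<Sum>\<^sub>\<infinity> k\<in>X. ennreal (z k powr conj_exp p)) (1 / conj_exp p)"

definition small_inner :: "int set \<Rightarrow> real \<Rightarrow> real \<Rightarrow> (int \<Rightarrow> real) \<Rightarrow> ennreal" where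
  "small_inner X q \<theta> z =
     (INF \<epsilon>\<in>{0<..}. ennreal (\<epsilon> powr (- \<theta> / (q * (1 + \<epsilon>)))) * lconj_norm X (q * (1 + \<epsilon>)) z)"

definition small_decomps :: "int set \<Rightarrow> (int \<Rightarrow> real) \<Rightarrow> (int \<Rightarrow> int \<Rightarrow> real) set" where
  "small_decomps X y = {d. \<forall>k\<in>X. (\<forall>j\<in>X. d k j \<ge> 0) \<and> ((\<lambda>j. d k j) has_sum \<bar>y k\<bar>) X}"

definition small_norm_enn :: "int set \<Rightarrow> real \<Rightarrow> real \<Rightarrow> (int \<Rightarrow> real) \<Rightarrow> ennreal" where
  "small_norm_enn X q \<theta> y =
     (INF d\<in>small_decomps X y. \<Sum>\<^sub>\<infinity> j\<in>X. small_inner X q \<theta> (\<lambda>k. d k j))"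

definition small_leb_space :: "int set \<Rightarrow> real \<Rightarrow> real \<Rightarrow> (int \<Rightarrow> real) set" where
  "small_leb_space X q \<theta> = {y. (\<forall>k. k \<notin> X \<longrightarrow> y k = 0) \<and> small_norm_enn X q \<theta> y < \<infinity>}"

definition small_norm :: "int set \<Rightarrow> real \<Rightarrow> real \<Rightarrow> (int \<Rightarrow> real) \<Rightarrow> real" where
  "small_norm X q \<theta> y = enn2real (small_norm_enn X q \<theta> y)"

end

theory Submission
  imports Defs
begin


lemma mult_INF_enn:
  fixes c :: ennreal assumes "c < top" "I \<noteq> {}"
  shows "c * (INF i\<in>I. f i) = (INF i\<in>I. c * f i)"
proof -
  have "(\<lambda>x. c * x) (Inf (f ` I)) = (INF s\<in>f ` I. c * s)"
  proof (rule continuous_at_Inf_mono)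
    have "continuous_on UNIV (\<lambda>x. c * x)"
      using ennreal_continuous_on_cmult[OF assms(1) continuous_on_id] by simp
    then have "continuous (at (Inf (f ` I))) (\<lambda>x. c * x)"
      by (simp add: continuous_on_eq_continuous_at)
    then show "continuous (at_right (Inf (f ` I))) (\<lambda>x. c * x)"
      using continuous_within_subset[where S=UNIV] by auto
  qed (auto simp: mono_def mult_left_mono assms)
  then show ?thesis by (simp add: image_comp)
qed

lemma le_INF_add_enn:
  fixes x :: ennreal
  assumes "\<And>a b. a \<in> A \<Longrightarrow> b \<in> B \<Longrightarrow> x \<le> f a + g b"
  shows "x \<le> (INF a\<in>A. f a) + (INF b\<in>B. g b)"
proof (rule ennreal_le_epsilon)
  fix e :: real assume e: "0 < e"
  show "x \<le> (INF a\<in>A. f a) + (INF b\<in>B. g b) + ennreal e"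
  proof (cases "(INF a\<in>A. f a) = top \<or> (INF b\<in>B. g b) = top")
    case True then show ?thesis by auto
  next
    case False
    then have "(INF a\<in>A. f a) \<noteq> \<infinity>" "(INF b\<in>B. g b) \<noteq> \<infinity>" by auto
    from INF_approx_ennreal[OF _ refl this(1), of "e/2"] e obtain a where a: "a \<in> A" "f a < (INF a\<in>A. f a) + ennreal (e/2)" by auto
    from INF_approx_ennreal[OF _ refl \<open>(INF b\<in>B. g b) \<noteq> \<infinity>\<close>, of "e/2"] e obtain b where b: "b \<in> B" "g b < (INF b\<in>B. g b) + ennreal (e/2)" by auto
    have "x \<le> f a + g b" using assms a b by auto
    also have "\<dots> \<le> ((INF a\<in>A. f a) + ennreal (e/2)) + ((INF b\<in>B. g b) + ennreal (e/2))"
      using a b by (intro add_mono) auto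
    also have "\<dots> = (INF a\<in>A. f a) + (INF b\<in>B. g b) + (ennreal (e/2) + ennreal (e/2))"
      by (simp add: ac_simps)
    also have "ennreal (e/2) + ennreal (e/2) = ennreal e"
      using e by (subst ennreal_plus[symmetric]) auto
    finally show ?thesis .
  qed
qed

lemma has_sum_ennreal:
  fixes f :: "'a \<Rightarrow> real"
  assumes "(f has_sum s) A" "\<And>x. x \<in> A \<Longrightarrow> f x \<ge> 0"
  shows "((\<lambda>x. ennreal (f x)) has_sum ennreal s) A"
proof -
  have "((ennreal \<circ> f) has_sum ennreal s) A"
    by (rule has_sum_comm_additive_general)
      (auto simp: assms sum_ennreal subset_iff intro!: tendsto_ennrealI tendsto_ident_at)
  then show ?thesis by (simp add: o_def)
qed

lemma infsum_ennreal:
  fixes f :: "'a \<Rightarrow> real"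
  assumes "(f has_sum s) A" "\<And>x. x \<in> A \<Longrightarrow> f x \<ge> 0"
  shows "(\<Sum>\<^sub>\<infinity>x\<in>A. ennreal (f x)) = ennreal s"
  using has_sum_ennreal[OF assms] by (rule infsumI)

lemma enn_sum_le_infsum:
  fixes f :: "'a \<Rightarrow> ennreal"
  assumes "finite F" "F \<subseteq> A"
  shows "sum f F \<le> infsum f A"
  unfolding nonneg_infsum_complete[of A f, OF zero_le] by (rule SUP_upper) (use assms in auto)

lemma infsum_Sigma_le_enn:
  fixes f :: "'a \<times> 'b \<Rightarrow> ennreal"
  shows "infsum f (Sigma A B) \<le> (\<Sum>\<^sub>\<infinity>x\<in>A. \<Sum>\<^sub>\<infinity>y\<in>B x. f (x, y))"
proof (rule infsum_le_finite_sums)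
  fix F assume F: "finite F" "F \<subseteq> Sigma A B"
  define F1 where "F1 = fst ` F"
  define G where "G x = {y. (x, y) \<in> F}" for x
  have FS: "F = Sigma F1 G" unfolding F1_def G_def by force
  have finG: "finite (G x)" for x
  proof -
    have "G x \<subseteq> snd ` F" unfolding G_def by force
    then show ?thesis using F(1) finite_subset by blast
  qed
  have "sum f F = (\<Sum>x\<in>F1. \<Sum>y\<in>G x. f (x, y))"
    unfolding FS using sum.Sigma[of F1 G "\<lambda>x y. f (x,y)"] finG F by (simp add: F1_def)
  also have "\<dots> \<le> (\<Sum>x\<in>F1. \<Sum>\<^sub>\<infinity>y\<in>B x. f (x, y))"
  proof (rule sum_mono)
    fix x assume "x \<in> F1"
    show "(\<Sum>y\<in>G x. f (x, y)) \<le> (\<Sum>\<^sub>\<infinity>y\<in>B x. f (x, y))"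
      by (rule enn_sum_le_infsum) (use F finG in \<open>auto simp: G_def\<close>)
  qed
  also have "\<dots> \<le> (\<Sum>\<^sub>\<infinity>x\<in>A. \<Sum>\<^sub>\<infinity>y\<in>B x. f (x, y))"
    by (rule enn_sum_le_infsum) (use F in \<open>auto simp: F1_def\<close>)
  finally show "sum f F \<le> (\<Sum>\<^sub>\<infinity>x\<in>A. \<Sum>\<^sub>\<infinity>y\<in>B x. f (x, y))" .
qed (rule nonneg_summable_on_complete, simp)

lemma infsum_cmult_enn:
  fixes f :: "'a \<Rightarrow> ennreal"
  shows "(\<Sum>\<^sub>\<infinity>x\<in>A. c * f x) = c * (\<Sum>\<^sub>\<infinity>x\<in>A. f x)"
  by (simp add: nonneg_infsum_complete SUP_mult_left_ennreal sum_distrib_left)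

lemma conj_exp_pos: "p > 1 \<Longrightarrow> conj_exp p > 0"
  unfolding conj_exp_def by auto

lemma enn_powr_mono:
  assumes "r \<ge> 0" "s \<le> t"
  shows "enn_powr s r \<le> enn_powr t r"
proof (cases "t = \<infinity>")
  case True then show ?thesis by (simp add: enn_powr_def)
next
  case False
  then have "s \<noteq> \<infinity>" using assms(2) by (auto simp: top_unique)
  then have "enn2real s \<le> enn2real t" using assms False by (intro enn2real_mono) (auto simp: top.not_eq_extremum)
  then show ?thesis using False \<open>s \<noteq> \<infinity>\<close> assms
    by (auto simp: enn_powr_def intro!: ennreal_leI powr_mono2)
qed

lemma enn_powr_ennreal: "x \<ge> 0 \<Longrightarrow> enn_powr (ennreal x) r = ennreal (x powr r)"
  by (simp add: enn_powr_def)

lemma lconj_mono: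
  assumes "p > 1" "\<And>k. k \<in> X \<Longrightarrow> 0 \<le> z k \<and> z k \<le> w k"
  shows "lconj_norm X p z \<le> lconj_norm X p w"
  unfolding lconj_norm_def
proof (rule enn_powr_mono)
  show "0 \<le> 1 / conj_exp p" using conj_exp_pos[OF assms(1)] by simp
  show "(\<Sum>\<^sub>\<infinity>k\<in>X. ennreal (z k powr conj_exp p)) \<le> (\<Sum>\<^sub>\<infinity>k\<in>X. ennreal (w k powr conj_exp p))"
    by (rule infsum_mono) (use assms conj_exp_pos[OF assms(1)] in \<open>auto intro!: ennreal_leI powr_mono2 nonneg_summable_on_complete\<close>)
qed

lemma qe_gt1: "q \<ge> 1 \<Longrightarrow> e > 0 \<Longrightarrow> q * (1 + e) > (1::real)"
  by (smt (verit) mult_le_cancel_left1 mult_less_cancel_left1)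

lemma small_inner_mono:
  assumes "q \<ge> 1" "\<And>k. k \<in> X \<Longrightarrow> 0 \<le> z k \<and> z k \<le> w k"
  shows "small_inner X q \<theta> z \<le> small_inner X q \<theta> w"
  unfolding small_inner_def
proof (rule INF_mono)
  fix e :: real assume e: "e \<in> {0<..}"
  have "lconj_norm X (q * (1 + e)) z \<le> lconj_norm X (q * (1 + e)) w"
    by (rule lconj_mono) (use assms e qe_gt1 in auto)
  then show "\<exists>n\<in>{0<..}. ennreal (n powr (- \<theta> / (q * (1 + n)))) * lconj_norm X (q * (1 + n)) z
          \<le> ennreal (e powr (- \<theta> / (q * (1 + e)))) * lconj_norm X (q * (1 + e)) w"
    using e by (intro bexI[of _ e]) (auto intro: mult_left_mono)
qed



lemma enn_powr_scale:
  assumes "a > 0" "c \<ge> 0"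
  shows "enn_powr (ennreal (c powr a) * S) (1 / a) = ennreal c * enn_powr S (1 / a)"
proof (cases "S = \<infinity>")
  case True
  show ?thesis
  proof (cases "c = 0")
    case True then show ?thesis using \<open>S = \<infinity>\<close> by (simp add: enn_powr_def)
  next
    case False
    then have "c > 0" using assms by auto
    then show ?thesis using \<open>S = \<infinity>\<close> by (simp add: enn_powr_def ennreal_mult_top)
  qed
next
  case False
  then obtain s where s: "S = ennreal s" "s \<ge> 0" by (cases S) auto
  have "(c powr a * s) powr (1 / a) = c * s powr (1 / a)"
    using assms s by (simp add: powr_mult powr_powr)
  note eq = this
  have "ennreal (c powr a) * S = ennreal (c powr a * s)"
    using s by (simp add: ennreal_mult)
  then have "enn_powr (ennreal (c powr a) * S) (1 / a) = ennreal ((c powr a * s) powr (1 / a))"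
    using s by (simp add: enn_powr_ennreal)
  also have "\<dots> = ennreal c * ennreal (s powr (1 / a))"
    unfolding eq using assms by (simp add: ennreal_mult)
  also have "\<dots> = ennreal c * enn_powr S (1 / a)"
    using s by (simp add: enn_powr_ennreal)
  finally show ?thesis .
qed

lemma lconj_scale:
  assumes "p > 1" "c \<ge> 0" "\<And>k. k \<in> X \<Longrightarrow> 0 \<le> z k"
  shows "lconj_norm X p (\<lambda>k. c * z k) = ennreal c * lconj_norm X p z"
proof -
  let ?a = "conj_exp p"
  have a: "?a > 0" using conj_exp_pos[OF assms(1)] .
  have "(\<Sum>\<^sub>\<infinity>k\<in>X. ennreal ((c * z k) powr ?a)) = (\<Sum>\<^sub>\<infinity>k\<in>X. ennreal (c powr ?a) * ennreal (z k powr ?a))"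
  proof (rule infsum_cong)
    fix k assume "k \<in> X"
    then have "(c * z k) powr ?a = c powr ?a * z k powr ?a" using assms by (simp add: powr_mult)
    then show "ennreal ((c * z k) powr ?a) = ennreal (c powr ?a) * ennreal (z k powr ?a)"
      by (simp add: ennreal_mult)
  qed
  also have "\<dots> = ennreal (c powr ?a) * (\<Sum>\<^sub>\<infinity>k\<in>X. ennreal (z k powr ?a))"
    by (rule infsum_cmult_enn)
  finally show ?thesis unfolding lconj_norm_def using enn_powr_scale[OF a assms(2)] by simp
qed

lemma small_inner_scale:
  assumes "q \<ge> 1" "c \<ge> 0" "\<And>k. k \<in> X \<Longrightarrow> 0 \<le> z k"
  shows "small_inner X q \<theta> (\<lambda>k. c * z k) = ennreal c * small_inner X q \<theta> z"
proof -
  have "small_inner X q \<theta> (\<lambda>k. c * z k) =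
     (INF e\<in>{0<..}. ennreal c * (ennreal (e powr (- \<theta> / (q * (1 + e)))) * lconj_norm X (q * (1 + e)) z))"
    unfolding small_inner_def
    by (rule INF_cong) (use assms qe_gt1 in \<open>auto simp: lconj_scale ac_simps\<close>)
  also have "\<dots> = ennreal c * small_inner X q \<theta> z"
    unfolding small_inner_def by (rule mult_INF_enn[symmetric]) auto
  finally show ?thesis .
qed

lemma small_inner_zero: "q \<ge> 1 \<Longrightarrow> small_inner X q \<theta> (\<lambda>k. 0) = 0"
  using small_inner_scale[of q 0 X "\<lambda>k. 0" \<theta>] by simp



lemma factor_lower:
  fixes q \<theta> e :: real
  assumes "q \<ge> 1" "\<theta> > 0" "e > 0"
  shows "exp (-\<theta>/q) \<le> e powr (- \<theta> / (q * (1 + e)))"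
proof -
  have "ln e \<le> e - 1" using assms(3) ln_le_minus_one by blast
  then have r: "ln e / (1 + e) \<le> 1" using assms(3) by (simp add: divide_le_eq)
  have tq: "\<theta> / q \<ge> 0" using assms by simp
  have "(- \<theta> / (q * (1 + e))) * ln e = - ((\<theta> / q) * (ln e / (1 + e)))" by (simp add: field_simps)
  also have "\<dots> \<ge> - ((\<theta> / q) * 1)" using mult_left_mono[OF r tq] by linarith
  finally have "-\<theta>/q \<le> (- \<theta> / (q * (1 + e))) * ln e" by simp
  then show ?thesis using assms(3) by (simp add: powr_def)
qed

lemma lconj_lower:
  assumes "p > 1" "\<And>k. k \<in> X \<Longrightarrow> 0 \<le> z k" "k \<in> X"
  shows "ennreal (z k) \<le> lconj_norm X p z"
proof -
  let ?a = "conj_exp p"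
  have a: "?a > 0" using conj_exp_pos[OF assms(1)] .
  have "ennreal (z k powr ?a) = (\<Sum>i\<in>{k}. ennreal (z i powr ?a))" by simp
  also have "\<dots> \<le> (\<Sum>\<^sub>\<infinity>i\<in>X. ennreal (z i powr ?a))"
    by (rule enn_sum_le_infsum) (use assms in auto)
  finally have "enn_powr (ennreal (z k powr ?a)) (1 / ?a) \<le> lconj_norm X p z"
    unfolding lconj_norm_def by (rule enn_powr_mono[rotated]) (use a in simp)
  moreover have "enn_powr (ennreal (z k powr ?a)) (1 / ?a) = ennreal (z k)"
    using a assms by (simp add: enn_powr_ennreal powr_powr)
  ultimately show ?thesis by simp
qed

lemma small_inner_lower:
  assumes "q \<ge> 1" "\<theta> > 0" "\<And>k. k \<in> X \<Longrightarrow> 0 \<le> z k" "k \<in> X"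
  shows "ennreal (exp (-\<theta>/q) * z k) \<le> small_inner X q \<theta> z"
  unfolding small_inner_def
proof (rule INF_greatest)
  fix e :: real assume e: "e \<in> {0<..}"
  have "ennreal (exp (-\<theta>/q) * z k) = ennreal (exp (-\<theta>/q)) * ennreal (z k)"
    using assms by (simp add: ennreal_mult)
  also have "\<dots> \<le> ennreal (e powr (- \<theta> / (q * (1 + e)))) * lconj_norm X (q * (1 + e)) z"
    by (rule mult_mono) (use assms e factor_lower[of q \<theta> e] lconj_lower[of "q * (1 + e)" X z k] qe_gt1[of q e] in \<open>auto intro: ennreal_leI\<close>)
  finally show "ennreal (exp (-\<theta>/q) * z k) \<le> ennreal (e powr (- \<theta> / (q * (1 + e)))) * lconj_norm X (q * (1 + e)) z" .
qed

lemma X_props: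
  fixes X :: "int set"
  assumes "X \<in> {{1..}, {0..}, UNIV}"
  shows "infinite X" "countable X"
proof -
  have i1: "infinite ({1..} :: int set)" by (rule infinite_Ici)
  have i2: "infinite ({0..} :: int set)" by (rule infinite_Ici)
  have i3: "infinite (UNIV :: int set)" by (rule infinite_UNIV_int)
  show "infinite X" using assms i1 i2 i3 by auto
  show "countable X" by simp
qed

lemma inject_into_X:
  fixes J :: "'j set" and X :: "int set"
  assumes "X \<in> {{1..}, {0..}, UNIV}" "countable J"
  obtains g :: "'j \<Rightarrow> int" where "inj_on g J" "g ` J \<subseteq> X"
proof -
  have b: "bij_betw (from_nat_into X) UNIV X"
    using X_props[OF assms(1)] by (intro bij_betw_from_nat_into) auto
  have "inj_on (from_nat_into X \<circ> to_nat_on J) J"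
    by (rule comp_inj_on) (use assms(2) b in \<open>auto simp: bij_betw_def intro: inj_on_subset\<close>)
  moreover have "(from_nat_into X \<circ> to_nat_on J) ` J \<subseteq> X"
    using b by (auto simp: bij_betw_def)
  ultimately show ?thesis using that by blast
qed



lemma small_norm_dominate:
  fixes D :: "'j \<Rightarrow> int \<Rightarrow> real" and X :: "int set" and J :: "'j set"
  assumes X: "X \<in> {{1..}, {0..}, UNIV}" and q: "q \<ge> 1" and J: "countable J"
    and nn: "\<And>j k. j \<in> J \<Longrightarrow> k \<in> X \<Longrightarrow> 0 \<le> D j k"
    and sm: "\<And>k. k \<in> X \<Longrightarrow> (\<lambda>j. D j k) summable_on J"
    and le: "\<And>k. k \<in> X \<Longrightarrow> \<bar>u k\<bar> \<le> (\<Sum>\<^sub>\<infinity>j\<in>J. D j k)"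
  shows "small_norm_enn X q \<theta> u \<le> (\<Sum>\<^sub>\<infinity>j\<in>J. small_inner X q \<theta> (\<lambda>k. D j k))"
proof -
  obtain g :: "'j \<Rightarrow> int" where g: "inj_on g J" "g ` J \<subseteq> X"
    using inject_into_X[OF X J] by blast
  define s where "s k = (\<Sum>\<^sub>\<infinity>j\<in>J. D j k)" for k
  define D' where "D' j k = (if s k = 0 then 0 else D j k * (\<bar>u k\<bar> / s k))" for j k
  have s_nn: "s k \<ge> 0" if "k \<in> X" for k
    unfolding s_def by (rule infsum_nonneg) (use nn that in auto)
  have D'nn: "0 \<le> D' j k \<and> D' j k \<le> D j k" if "j \<in> J" "k \<in> X" for j k
  proof (cases "s k = 0")
    case True then show ?thesis using nn that by (simp add: D'_def)
  next
    case False
    then have "s k > 0" using s_nn[OF that(2)] by simp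
    moreover have "\<bar>u k\<bar> / s k \<le> 1" using le[OF that(2)] \<open>s k > 0\<close> by (simp add: s_def)
    moreover have "D j k * (\<bar>u k\<bar> / s k) \<le> D j k * 1"
      by (rule mult_left_mono) (use calculation nn[OF that] in auto)
    ultimately show ?thesis using nn[OF that] False
      by (simp add: D'_def)
  qed
  have D'sum: "((\<lambda>j. D' j k) has_sum \<bar>u k\<bar>) J" if "k \<in> X" for k
  proof (cases "s k = 0")
    case True
    then have "\<bar>u k\<bar> = 0" using le[OF that] by (simp add: s_def)
    then show ?thesis using True by (simp add: D'_def)
  next
    case False
    have "((\<lambda>j. D j k * (\<bar>u k\<bar> / s k)) has_sum s k * (\<bar>u k\<bar> / s k)) J"
      by (rule has_sum_cmult_left) (use sm[OF that] in \<open>simp add: s_def\<close>)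
    then show ?thesis using False by (simp add: D'_def)
  qed
  define d where "d k j' = (if j' \<in> g ` J then D' (inv_into J g j') k else 0)" for k j'
  have colg: "(\<lambda>k. d k (g j)) = (\<lambda>k. D' j k)" if "j \<in> J" for j
    using that g(1) by (auto simp: d_def)
  have "d \<in> small_decomps X u"
    unfolding small_decomps_def
  proof (intro CollectI ballI conjI)
    fix k j' assume k: "k \<in> X" and "j' \<in> X"
    show "0 \<le> d k j'" using D'nn k g by (auto simp: d_def inv_into_into)
  next
    fix k assume k: "k \<in> X"
    have "(((\<lambda>j'. d k j') \<circ> g) has_sum \<bar>u k\<bar>) J"
      by (rule has_sum_cong[THEN iffD2, OF _ D'sum[OF k]]) (use colg in \<open>auto dest: fun_cong\<close>)
    then have "((\<lambda>j'. d k j') has_sum \<bar>u k\<bar>) (g ` J)"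
      by (simp add: has_sum_reindex[OF g(1)])
    then show "((\<lambda>j'. d k j') has_sum \<bar>u k\<bar>) X"
      by (rule has_sum_cong_neutral[THEN iffD1, rotated -1]) (use g in \<open>auto simp: d_def\<close>)
  qed
  then have "small_norm_enn X q \<theta> u \<le> (\<Sum>\<^sub>\<infinity>j'\<in>X. small_inner X q \<theta> (\<lambda>k. d k j'))"
    unfolding small_norm_enn_def by (rule INF_lower)
  also have "\<dots> = (\<Sum>\<^sub>\<infinity>j'\<in>g ` J. small_inner X q \<theta> (\<lambda>k. d k j'))"
    by (rule infsum_cong_neutral) (use g q in \<open>auto simp: d_def small_inner_zero\<close>)
  also have "\<dots> = (\<Sum>\<^sub>\<infinity>j\<in>J. small_inner X q \<theta> (\<lambda>k. D' j k))"
    by (simp add: infsum_reindex[OF g(1)] o_def colg cong: infsum_cong)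
  also have "\<dots> \<le> (\<Sum>\<^sub>\<infinity>j\<in>J. small_inner X q \<theta> (\<lambda>k. D j k))"
    by (rule infsum_mono) (use D'nn q in \<open>auto intro!: small_inner_mono nonneg_summable_on_complete\<close>)
  finally show ?thesis .
qed



lemma decomps_nonempty:
  fixes X :: "int set"
  assumes X: "X \<in> {{1..}, {0..}, UNIV}"
  shows "small_decomps X y \<noteq> {}"
proof -
  obtain j0 where j0: "j0 \<in> X" using X_props(1)[OF X] by (metis finite.emptyI ex_in_conv)
  define d where "d k j = (if j = j0 then \<bar>y k\<bar> else 0)" for k j
  have "((\<lambda>j. d k j) has_sum \<bar>y k\<bar>) X" for k
  proof -
    have "((\<lambda>j. d k j) has_sum (\<Sum>j\<in>{j0}. d k j)) {j0}" by (rule has_sum_finite) simp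
    then have "((\<lambda>j. d k j) has_sum \<bar>y k\<bar>) {j0}" by (simp add: d_def)
    then show ?thesis
      by (rule has_sum_cong_neutral[THEN iffD1, rotated -1]) (use j0 in \<open>auto simp: d_def\<close>)
  qed
  moreover have "d k j \<ge> 0" for k j by (simp add: d_def)
  ultimately have "d \<in> small_decomps X y" unfolding small_decomps_def by blast
  then show ?thesis by blast
qed

lemma has_sum_Sigma_nonneg_real:
  fixes f :: "'a \<times> 'b \<Rightarrow> real"
  assumes f: "\<And>x. x \<in> A \<Longrightarrow> ((\<lambda>y. f (x,y)) has_sum g x) (B x)"
    and g: "(g has_sum S) A"
    and nn: "\<And>x y. x \<in> A \<Longrightarrow> y \<in> B x \<Longrightarrow> f (x,y) \<ge> 0"
  shows "(f has_sum S) (Sigma A B)"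
proof (rule has_sum_SigmaI[OF f g])
  show "f summable_on Sigma A B"
    by (rule summable_on_SigmaI[OF f _ nn]) (use g in \<open>auto simp: summable_on_def\<close>)
qed

lemma small_norm_zero:
  assumes X: "X \<in> {{1..}, {0..}, UNIV}" and q: "q \<ge> 1"
  shows "small_norm_enn X q \<theta> (\<lambda>k. 0) = 0"
proof -
  have "small_norm_enn X q \<theta> (\<lambda>k. 0) \<le> (\<Sum>\<^sub>\<infinity>j\<in>X. small_inner X q \<theta> (\<lambda>k. (\<lambda>j k. 0::real) j k))"
    by (rule small_norm_dominate[OF X q]) auto
  also have "\<dots> = 0" using q by (simp add: small_inner_zero)
  finally show ?thesis by simp
qed

lemma small_norm_scale_le:
  assumes X: "X \<in> {{1..}, {0..}, UNIV}" and q: "q \<ge> 1"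
  shows "small_norm_enn X q \<theta> (\<lambda>k. c * y k) \<le> ennreal \<bar>c\<bar> * small_norm_enn X q \<theta> y"
proof -
  have "small_norm_enn X q \<theta> (\<lambda>k. c * y k) \<le> ennreal \<bar>c\<bar> * (\<Sum>\<^sub>\<infinity>j\<in>X. small_inner X q \<theta> (\<lambda>k. d k j))"
    if d: "d \<in> small_decomps X y" for d
  proof -
    have dd: "\<And>k j. k \<in> X \<Longrightarrow> j \<in> X \<Longrightarrow> d k j \<ge> 0" "\<And>k. k \<in> X \<Longrightarrow> ((\<lambda>j. d k j) has_sum \<bar>y k\<bar>) X"
      using d by (auto simp: small_decomps_def)
    have hs: "((\<lambda>j. \<bar>c\<bar> * d k j) has_sum \<bar>c\<bar> * \<bar>y k\<bar>) X" if "k \<in> X" for k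
      by (rule has_sum_cmult_right[OF dd(2)[OF that]])
    have "small_norm_enn X q \<theta> (\<lambda>k. c * y k) \<le> (\<Sum>\<^sub>\<infinity>j\<in>X. small_inner X q \<theta> (\<lambda>k. (\<lambda>j k. \<bar>c\<bar> * d k j) j k))"
    proof (rule small_norm_dominate[OF X q])
      show "countable X" by simp
      show "\<And>j k. j \<in> X \<Longrightarrow> k \<in> X \<Longrightarrow> 0 \<le> \<bar>c\<bar> * d k j" using dd by simp
      show "\<And>k. k \<in> X \<Longrightarrow> (\<lambda>j. \<bar>c\<bar> * d k j) summable_on X" using hs by (auto simp: summable_on_def)
      show "\<And>k. k \<in> X \<Longrightarrow> \<bar>c * y k\<bar> \<le> (\<Sum>\<^sub>\<infinity>j\<in>X. \<bar>c\<bar> * d k j)"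
        using infsumI[OF hs] by (simp add: abs_mult)
    qed
    also have "\<dots> = (\<Sum>\<^sub>\<infinity>j\<in>X. ennreal \<bar>c\<bar> * small_inner X q \<theta> (\<lambda>k. d k j))"
      by (rule infsum_cong) (use q dd in \<open>auto intro!: small_inner_scale\<close>)
    also have "\<dots> = ennreal \<bar>c\<bar> * (\<Sum>\<^sub>\<infinity>j\<in>X. small_inner X q \<theta> (\<lambda>k. d k j))"
      by (rule infsum_cmult_enn)
    finally show ?thesis .
  qed
  then have "small_norm_enn X q \<theta> (\<lambda>k. c * y k) \<le> (INF d\<in>small_decomps X y. ennreal \<bar>c\<bar> * (\<Sum>\<^sub>\<infinity>j\<in>X. small_inner X q \<theta> (\<lambda>k. d k j)))"
    by (rule INF_greatest)
  also have "\<dots> = ennreal \<bar>c\<bar> * small_norm_enn X q \<theta> y"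
    unfolding small_norm_enn_def by (rule mult_INF_enn[symmetric]) (use decomps_nonempty[OF X] in auto)
  finally show ?thesis .
qed

lemma small_norm_scale:
  assumes X: "X \<in> {{1..}, {0..}, UNIV}" and q: "q \<ge> 1"
  shows "small_norm_enn X q \<theta> (\<lambda>k. c * y k) = ennreal \<bar>c\<bar> * small_norm_enn X q \<theta> y"
proof (cases "c = 0")
  case True then show ?thesis using small_norm_zero[OF X q] by simp
next
  case False
  have "ennreal \<bar>c\<bar> * small_norm_enn X q \<theta> y = ennreal \<bar>c\<bar> * small_norm_enn X q \<theta> (\<lambda>k. (1/c) * (c * y k))"
    using False by simp
  also have "\<dots> \<le> ennreal \<bar>c\<bar> * (ennreal \<bar>1/c\<bar> * small_norm_enn X q \<theta> (\<lambda>k. c * y k))"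
    by (intro mult_left_mono small_norm_scale_le[OF X q]) auto
  also have "\<dots> = (ennreal \<bar>c\<bar> * ennreal \<bar>1/c\<bar>) * small_norm_enn X q \<theta> (\<lambda>k. c * y k)"
    by (simp only: mult.assoc)
  also have "ennreal \<bar>c\<bar> * ennreal \<bar>1/c\<bar> = ennreal (\<bar>c\<bar> * \<bar>1/c\<bar>)"
    by (rule ennreal_mult[symmetric]) auto
  also have "\<bar>c\<bar> * \<bar>1/c\<bar> = 1" using False by (simp add: abs_mult[symmetric])
  finally have "ennreal \<bar>c\<bar> * small_norm_enn X q \<theta> y \<le> small_norm_enn X q \<theta> (\<lambda>k. c * y k)" by simp
  then show ?thesis using small_norm_scale_le[OF X q] by (metis antisym)
qed

lemma small_norm_lower:
  assumes X: "X \<in> {{1..}, {0..}, UNIV}" and q: "q \<ge> 1" and th: "\<theta> > 0" and k: "k \<in> X"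
  shows "ennreal (exp (-\<theta>/q) * \<bar>y k\<bar>) \<le> small_norm_enn X q \<theta> y"
  unfolding small_norm_enn_def
proof (rule INF_greatest)
  fix d assume d: "d \<in> small_decomps X y"
  have dd: "\<And>j. j \<in> X \<Longrightarrow> d k j \<ge> 0" "((\<lambda>j. d k j) has_sum \<bar>y k\<bar>) X"
    using d k by (auto simp: small_decomps_def)
  have "((\<lambda>j. exp (-\<theta>/q) * d k j) has_sum exp (-\<theta>/q) * \<bar>y k\<bar>) X"
    by (rule has_sum_cmult_right[OF dd(2)])
  then have "ennreal (exp (-\<theta>/q) * \<bar>y k\<bar>) = (\<Sum>\<^sub>\<infinity>j\<in>X. ennreal (exp (-\<theta>/q) * d k j))"
    by (rule infsum_ennreal[symmetric]) (use dd in simp)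
  also have "\<dots> \<le> (\<Sum>\<^sub>\<infinity>j\<in>X. small_inner X q \<theta> (\<lambda>k. d k j))"
  proof (rule infsum_mono)
    fix j assume j: "j \<in> X"
    have "\<And>k'. k' \<in> X \<Longrightarrow> 0 \<le> d k' j" using d j by (auto simp: small_decomps_def)
    then show "ennreal (exp (-\<theta>/q) * d k j) \<le> small_inner X q \<theta> (\<lambda>k. d k j)"
      using small_inner_lower[of q \<theta> X "\<lambda>k'. d k' j" k] q th k by simp
  qed (auto intro: nonneg_summable_on_complete)
  finally show "ennreal (exp (-\<theta>/q) * \<bar>y k\<bar>) \<le> (\<Sum>\<^sub>\<infinity>j\<in>X. small_inner X q \<theta> (\<lambda>k. d k j))" .
qed

lemma small_norm_triangle:
  assumes X: "X \<in> {{1..}, {0..}, UNIV}" and q: "q \<ge> 1"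
  shows "small_norm_enn X q \<theta> (\<lambda>k. y k + z k) \<le> small_norm_enn X q \<theta> y + small_norm_enn X q \<theta> z"
  unfolding small_norm_enn_def[of X q \<theta> y] small_norm_enn_def[of X q \<theta> z]
proof (rule le_INF_add_enn)
  fix dy dz assume dy: "dy \<in> small_decomps X y" and dz: "dz \<in> small_decomps X z"
  define D where "D = (\<lambda>(b, j) k. if b then dy k j else dz k j)"
  have dyy: "\<And>k j. k \<in> X \<Longrightarrow> j \<in> X \<Longrightarrow> dy k j \<ge> 0" "\<And>k. k \<in> X \<Longrightarrow> ((\<lambda>j. dy k j) has_sum \<bar>y k\<bar>) X"
    using dy by (auto simp: small_decomps_def)
  have dzz: "\<And>k j. k \<in> X \<Longrightarrow> j \<in> X \<Longrightarrow> dz k j \<ge> 0" "\<And>k. k \<in> X \<Longrightarrow> ((\<lambda>j. dz k j) has_sum \<bar>z k\<bar>) X"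
    using dz by (auto simp: small_decomps_def)
  have hs: "((\<lambda>p. D p k) has_sum (\<bar>y k\<bar> + \<bar>z k\<bar>)) (UNIV \<times> X)" if k: "k \<in> X" for k
  proof (rule has_sum_Sigma_nonneg_real[where g = "\<lambda>b. if b then \<bar>y k\<bar> else \<bar>z k\<bar>"])
    show "((\<lambda>j. D (b, j) k) has_sum (if b then \<bar>y k\<bar> else \<bar>z k\<bar>)) X" for b
      using dyy(2)[OF k] dzz(2)[OF k] by (cases b) (simp_all add: D_def)
    have "((\<lambda>b. if b then \<bar>y k\<bar> else \<bar>z k\<bar>) has_sum (\<Sum>b\<in>UNIV. if b then \<bar>y k\<bar> else \<bar>z k\<bar>)) UNIV"
      by (rule has_sum_finite) simp
    then show "((\<lambda>b. if b then \<bar>y k\<bar> else \<bar>z k\<bar>) has_sum \<bar>y k\<bar> + \<bar>z k\<bar>) UNIV"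
      by (simp add: UNIV_bool add.commute)
    show "\<And>b j. b \<in> UNIV \<Longrightarrow> j \<in> X \<Longrightarrow> 0 \<le> D (b, j) k"
      using dyy dzz k by (simp add: D_def)
  qed
  have "small_norm_enn X q \<theta> (\<lambda>k. y k + z k) \<le> (\<Sum>\<^sub>\<infinity>p\<in>UNIV \<times> X. small_inner X q \<theta> (\<lambda>k. D p k))"
  proof (rule small_norm_dominate[OF X q])
    show "countable (UNIV \<times> X :: (bool \<times> int) set)" by (rule countable_SIGMA) auto
    show "\<And>p k. p \<in> UNIV \<times> X \<Longrightarrow> k \<in> X \<Longrightarrow> 0 \<le> D p k"
      using dyy dzz by (auto simp: D_def)
    show "\<And>k. k \<in> X \<Longrightarrow> (\<lambda>p. D p k) summable_on UNIV \<times> X" using hs by (auto simp: summable_on_def)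
    show "\<And>k. k \<in> X \<Longrightarrow> \<bar>y k + z k\<bar> \<le> (\<Sum>\<^sub>\<infinity>p\<in>UNIV \<times> X. D p k)"
      using infsumI[OF hs] by (simp add: abs_triangle_ineq)
  qed
  also have "\<dots> \<le> (\<Sum>\<^sub>\<infinity>b\<in>UNIV. \<Sum>\<^sub>\<infinity>j\<in>X. small_inner X q \<theta> (\<lambda>k. D (b, j) k))"
    by (rule infsum_Sigma_le_enn)
  also have "\<dots> = (\<Sum>b\<in>UNIV. \<Sum>\<^sub>\<infinity>j\<in>X. small_inner X q \<theta> (\<lambda>k. D (b, j) k))"
    by (rule infsum_finite) simp
  also have "\<dots> = (\<Sum>\<^sub>\<infinity>j\<in>X. small_inner X q \<theta> (\<lambda>k. dy k j)) + (\<Sum>\<^sub>\<infinity>j\<in>X. small_inner X q \<theta> (\<lambda>k. dz k j))"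
    by (simp add: UNIV_bool D_def add.commute)
  finally show "small_norm_enn X q \<theta> (\<lambda>k. y k + z k) \<le> (\<Sum>\<^sub>\<infinity>j\<in>X. small_inner X q \<theta> (\<lambda>k. dy k j)) + (\<Sum>\<^sub>\<infinity>j\<in>X. small_inner X q \<theta> (\<lambda>k. dz k j))" .
qed



lemma S_fin: "y \<in> small_leb_space X q \<theta> \<Longrightarrow> small_norm_enn X q \<theta> y = ennreal (small_norm X q \<theta> y)"
  unfolding small_leb_space_def small_norm_def by (auto simp: less_top[symmetric])

lemma S_add:
  assumes X: "X \<in> {{1..}, {0..}, UNIV}" and q: "q \<ge> 1"
    and y: "y \<in> small_leb_space X q \<theta>" and z: "z \<in> small_leb_space X q \<theta>"
  shows "(\<lambda>k. y k + z k) \<in> small_leb_space X q \<theta> \<and>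
    small_norm X q \<theta> (\<lambda>k. y k + z k) \<le> small_norm X q \<theta> y + small_norm X q \<theta> z"
proof -
  have le: "small_norm_enn X q \<theta> (\<lambda>k. y k + z k) \<le> ennreal (small_norm X q \<theta> y) + ennreal (small_norm X q \<theta> z)"
    using small_norm_triangle[OF X q, of \<theta> y z] S_fin[OF y] S_fin[OF z] by simp
  also have "\<dots> = ennreal (small_norm X q \<theta> y + small_norm X q \<theta> z)"
    by (rule ennreal_plus[symmetric]) (auto simp: small_norm_def)
  finally have le2: "small_norm_enn X q \<theta> (\<lambda>k. y k + z k) \<le> ennreal (small_norm X q \<theta> y + small_norm X q \<theta> z)" .
  then have "small_norm_enn X q \<theta> (\<lambda>k. y k + z k) < \<infinity>"
    using le_less_trans by fastforce
  then have "(\<lambda>k. y k + z k) \<in> small_leb_space X q \<theta>"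
    using y z by (auto simp: small_leb_space_def)
  moreover have "small_norm X q \<theta> (\<lambda>k. y k + z k) \<le> small_norm X q \<theta> y + small_norm X q \<theta> z"
    unfolding small_norm_def[of X q \<theta> "\<lambda>k. y k + z k"]
    by (rule enn2real_leI[OF _ le2]) (auto simp: small_norm_def)
  ultimately show ?thesis by blast
qed

lemma S_scale:
  assumes X: "X \<in> {{1..}, {0..}, UNIV}" and q: "q \<ge> 1"
    and y: "y \<in> small_leb_space X q \<theta>"
  shows "(\<lambda>k. c * y k) \<in> small_leb_space X q \<theta> \<and>
    small_norm X q \<theta> (\<lambda>k. c * y k) = \<bar>c\<bar> * small_norm X q \<theta> y"
proof -
  have eq: "small_norm_enn X q \<theta> (\<lambda>k. c * y k) = ennreal \<bar>c\<bar> * ennreal (small_norm X q \<theta> y)"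
    using small_norm_scale[OF X q, of \<theta> c y] S_fin[OF y] by simp
  then have "(\<lambda>k. c * y k) \<in> small_leb_space X q \<theta>"
    using y by (auto simp: small_leb_space_def ennreal_mult_less_top)
  moreover have "small_norm X q \<theta> (\<lambda>k. c * y k) = \<bar>c\<bar> * small_norm X q \<theta> y"
    unfolding small_norm_def[of X q \<theta> "\<lambda>k. c * y k"] eq
    by (simp add: enn2real_mult small_norm_def)
  ultimately show ?thesis by blast
qed

lemma S_diff:
  assumes X: "X \<in> {{1..}, {0..}, UNIV}" and q: "q \<ge> 1"
    and y: "y \<in> small_leb_space X q \<theta>" and z: "z \<in> small_leb_space X q \<theta>"
  shows "(\<lambda>k. y k - z k) \<in> small_leb_space X q \<theta>"
proof -
  have "(\<lambda>k. (-1) * z k) \<in> small_leb_space X q \<theta>" using S_scale[OF X q z] by blast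
  from S_add[OF X q y this] show ?thesis by simp
qed

lemma S_norm_sym:
  assumes X: "X \<in> {{1..}, {0..}, UNIV}" and q: "q \<ge> 1"
    and y: "y \<in> small_leb_space X q \<theta>" and z: "z \<in> small_leb_space X q \<theta>"
  shows "small_norm X q \<theta> (\<lambda>k. y k - z k) = small_norm X q \<theta> (\<lambda>k. z k - y k)"
proof -
  have "small_norm X q \<theta> (\<lambda>k. (-1) * (z k - y k)) = \<bar>-1\<bar> * small_norm X q \<theta> (\<lambda>k. z k - y k)"
    using S_scale[OF X q S_diff[OF X q z y]] by blast
  then show ?thesis by simp
qed

lemma S_zero_out: "y \<in> small_leb_space X q \<theta> \<Longrightarrow> k \<notin> X \<Longrightarrow> y k = 0"
  by (auto simp: small_leb_space_def)



lemma small_complete: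
  fixes f :: "nat \<Rightarrow> int \<Rightarrow> real" and X :: "int set"
  assumes X: "X \<in> {{1..}, {0..}, UNIV}" and q: "q \<ge> 1" and th: "\<theta> > 0"
    and fS: "\<And>n. f n \<in> small_leb_space X q \<theta>"
    and cau: "\<forall>e>0. \<exists>M. \<forall>m\<ge>M. \<forall>n\<ge>M. small_norm X q \<theta> (\<lambda>k. f m k - f n k) < e"
  shows "\<exists>y\<in>small_leb_space X q \<theta>. (\<lambda>n. small_norm X q \<theta> (\<lambda>k. f n k - y k)) \<longlonglongrightarrow> 0"
proof -
  let ?S = "small_leb_space X q \<theta>"
  let ?n = "small_norm X q \<theta>"
  let ?c = "exp (-\<theta>/q)"
  have "\<forall>i. \<exists>M. \<forall>m\<ge>M. \<forall>n\<ge>M. ?n (\<lambda>k. f m k - f n k) < (1/2)^i"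
    using cau by simp
  then obtain M where M: "\<And>i m n. m \<ge> M i \<Longrightarrow> n \<ge> M i \<Longrightarrow> ?n (\<lambda>k. f m k - f n k) < (1/2)^i"
    by metis
  define r where "r i = (\<Sum>l\<le>i. M l)" for i
  have rM: "M i \<le> r i" for i unfolding r_def by (rule member_le_sum) auto
  have rmono: "r i \<le> r (Suc i)" for i unfolding r_def by simp
  define g where "g i k = f (r (Suc i)) k - f (r i) k" for i k
  have gS: "g i \<in> ?S" for i
    unfolding g_def[abs_def] by (rule S_diff[OF X q fS fS])
  have gn: "?n (g i) < (1/2)^i" for i
    unfolding g_def[abs_def] by (rule M) (use rM[of i] rmono[of i] in auto)
  have "\<exists>d\<in>small_decomps X (g i). (\<Sum>\<^sub>\<infinity>j\<in>X. small_inner X q \<theta> (\<lambda>k. d k j)) < ennreal ((1/2)^i)" for i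
  proof -
    have "small_norm_enn X q \<theta> (g i) < ennreal ((1/2)^i)"
      using S_fin[OF gS[of i]] gn[of i] by (simp add: ennreal_lessI)
    then show ?thesis unfolding small_norm_enn_def by (simp add: INF_less_iff)
  qed
  then obtain D where D: "\<And>i. D i \<in> small_decomps X (g i)"
    and Dlt: "\<And>i. (\<Sum>\<^sub>\<infinity>j\<in>X. small_inner X q \<theta> (\<lambda>k. D i k j)) < ennreal ((1/2)^i)"
    by metis
  have Dnn: "\<And>i k j. k \<in> X \<Longrightarrow> j \<in> X \<Longrightarrow> D i k j \<ge> 0"
    and Dhs: "\<And>i k. k \<in> X \<Longrightarrow> ((\<lambda>j. D i k j) has_sum \<bar>g i k\<bar>) X"
    using D by (auto simp: small_decomps_def)
  have c0: "?c > 0" by simp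
  have gbound: "\<bar>g i k\<bar> \<le> (1/?c) * (1/2)^i" for i k
  proof (cases "k \<in> X")
    case True
    have "ennreal (?c * \<bar>g i k\<bar>) \<le> ennreal (?n (g i))"
      using small_norm_lower[OF X q th True, of "g i"] S_fin[OF gS[of i]] by simp
    then have "?c * \<bar>g i k\<bar> \<le> ?n (g i)"
      by (simp add: ennreal_le_iff small_norm_def)
    then have "?c * \<bar>g i k\<bar> \<le> (1/2)^i" using gn[of i] by linarith
    then show ?thesis using c0 by (simp add: field_simps)
  next
    case False
    then have "g i k = 0" using gS[of i] by (simp add: S_zero_out)
    then show ?thesis by simp
  qed
  have sumabs: "summable (\<lambda>i. \<bar>g i k\<bar>)" for k
  proof (rule summable_comparison_test)
    show "\<exists>N. \<forall>n\<ge>N. norm \<bar>g n k\<bar> \<le> (1/?c) * (1/2)^n" using gbound by auto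
    show "summable (\<lambda>n. (1/?c) * (1/2::real)^n)"
      by (rule summable_mult) (simp add: summable_geometric)
  qed
  have sumg: "summable (\<lambda>i. g i k)" for k
    using sumabs[of k] by (rule summable_rabs_cancel)
  define y where "y k = f (r 0) k + (\<Sum>i. g i k)" for k
  have tele: "f (r m) k = f (r 0) k + (\<Sum>i<m. g i k)" for m k
    unfolding g_def using sum_lessThan_telescope[of "\<lambda>i. f (r i) k" m] by simp
  have tail: "y k - f (r m) k = (\<Sum>i. g (i + m) k)" for m k
    unfolding y_def tele[of m k] using suminf_minus_initial_segment[OF sumg[of k], of m] by simp
  have tailS: "(\<lambda>k. y k - f (r m) k) \<in> ?S \<and> small_norm_enn X q \<theta> (\<lambda>k. y k - f (r m) k) \<le> ennreal (2 * (1/2)^m)" for m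
  proof -
    define Dm where "Dm = (\<lambda>(i, j) k. D (i + m) k j)"
    have geo: "(\<lambda>i. (1/2::real)^(i + m)) sums ((1/2)^m * 2)"
    proof -
      have "(\<lambda>i. (1/2::real)^m * (1/2)^i) sums ((1/2)^m * (1 / (1 - 1/2)))"
        by (rule sums_mult) (rule geometric_sums, simp)
      then show ?thesis by (simp add: power_add mult.commute)
    qed
    have hs: "((\<lambda>p. Dm p k) has_sum (\<Sum>i. \<bar>g (i + m) k\<bar>)) (UNIV \<times> X)" if k: "k \<in> X" for k
    proof (rule has_sum_Sigma_nonneg_real[where g = "\<lambda>i. \<bar>g (i + m) k\<bar>"])
      show "((\<lambda>j. Dm (i, j) k) has_sum \<bar>g (i + m) k\<bar>) X" for i
        using Dhs[OF k, of "i + m"] by (simp add: Dm_def)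
      show "((\<lambda>i. \<bar>g (i + m) k\<bar>) has_sum (\<Sum>i. \<bar>g (i + m) k\<bar>)) UNIV"
        by (rule sums_nonneg_imp_has_sum)
          (use summable_ignore_initial_segment[OF sumabs[of k], of m] in \<open>auto simp: summable_sums\<close>)
      show "\<And>i j. i \<in> UNIV \<Longrightarrow> j \<in> X \<Longrightarrow> 0 \<le> Dm (i, j) k"
        using Dnn k by (simp add: Dm_def)
    qed
    have "small_norm_enn X q \<theta> (\<lambda>k. y k - f (r m) k) \<le> (\<Sum>\<^sub>\<infinity>p\<in>UNIV \<times> X. small_inner X q \<theta> (\<lambda>k. Dm p k))"
    proof (rule small_norm_dominate[OF X q])
      show "countable (UNIV \<times> X :: (nat \<times> int) set)" by (rule countable_SIGMA) auto
      show "\<And>p k. p \<in> UNIV \<times> X \<Longrightarrow> k \<in> X \<Longrightarrow> 0 \<le> Dm p k"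
        using Dnn by (auto simp: Dm_def)
      show "\<And>k. k \<in> X \<Longrightarrow> (\<lambda>p. Dm p k) summable_on UNIV \<times> X" using hs by (auto simp: summable_on_def)
      show "\<bar>y k - f (r m) k\<bar> \<le> (\<Sum>\<^sub>\<infinity>p\<in>UNIV \<times> X. Dm p k)" if k: "k \<in> X" for k
        unfolding infsumI[OF hs[OF k]] tail
        by (rule summable_rabs) (rule summable_ignore_initial_segment[OF sumabs])
    qed
    also have "\<dots> \<le> (\<Sum>\<^sub>\<infinity>i\<in>UNIV. \<Sum>\<^sub>\<infinity>j\<in>X. small_inner X q \<theta> (\<lambda>k. Dm (i, j) k))"
      by (rule infsum_Sigma_le_enn)
    also have "\<dots> \<le> (\<Sum>\<^sub>\<infinity>i\<in>UNIV. ennreal ((1/2)^(i + m)))"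
      by (rule infsum_mono) (use Dlt in \<open>auto simp: Dm_def intro: less_imp_le nonneg_summable_on_complete\<close>)
    also have "\<dots> = ennreal ((1/2)^m * 2)"
      by (rule infsum_ennreal) (use geo in \<open>auto intro: sums_nonneg_imp_has_sum\<close>)
    finally have le: "small_norm_enn X q \<theta> (\<lambda>k. y k - f (r m) k) \<le> ennreal (2 * (1/2)^m)"
      by (simp add: mult.commute)
    have "y k = 0" if "k \<notin> X" for k
    proof -
      have "g i k = 0" for i using gS[of i] that by (simp add: S_zero_out)
      then show ?thesis unfolding y_def using fS[of "r 0"] that by (simp add: S_zero_out)
    qed
    moreover have "f (r m) k = 0" if "k \<notin> X" for k using S_zero_out[OF fS that] .
    moreover have "small_norm_enn X q \<theta> (\<lambda>k. y k - f (r m) k) < \<infinity>"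
      using le le_less_trans by fastforce
    ultimately show ?thesis using le by (simp add: small_leb_space_def)
  qed
  have yS: "y \<in> ?S"
  proof -
    have "(\<lambda>k. f (r 0) k + (y k - f (r 0) k)) \<in> ?S"
      using S_add[OF X q fS tailS[THEN conjunct1]] by blast
    then show ?thesis by simp
  qed
  have tailn: "?n (\<lambda>k. f (r m) k - y k) \<le> 2 * (1/2)^m" for m
  proof -
    have "?n (\<lambda>k. y k - f (r m) k) \<le> 2 * (1/2)^m"
      unfolding small_norm_def by (rule enn2real_leI) (use tailS in auto)
    then show ?thesis using S_norm_sym[OF X q yS fS] by simp
  qed
  have "(\<lambda>n. ?n (\<lambda>k. f n k - y k)) \<longlonglongrightarrow> 0"
  proof (rule LIMSEQ_I)
    fix e :: real assume e: "0 < e"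
    obtain i where i: "(1/2::real)^i < e/3"
      using real_arch_pow_inv[of "e/3" "1/2"] e by auto
    have "norm (?n (\<lambda>k. f n k - y k) - 0) < e" if n: "n \<ge> r i" for n
    proof -
      have nn: "?n z \<ge> 0" for z by (simp add: small_norm_def)
      have "?n (\<lambda>k. f n k - y k) = ?n (\<lambda>k. (f n k - f (r i) k) + (f (r i) k - y k))" by simp
      also have "\<dots> \<le> ?n (\<lambda>k. f n k - f (r i) k) + ?n (\<lambda>k. f (r i) k - y k)"
        using S_add[OF X q S_diff[OF X q fS fS] S_diff[OF X q fS yS]] by blast
      also have "\<dots> < (1/2)^i + 2 * (1/2)^i"
        using M[of i n "r i"] rM[of i] n tailn[of i] by linarith
      finally show ?thesis using i nn by simp
    qed
    then show "\<exists>no. \<forall>n\<ge>no. norm (?n (\<lambda>k. f n k - y k) - 0) < e" by blast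
  qed
  then show ?thesis using yS by blast
qed


lemma S_definite:
  assumes X: "X \<in> {{1..}, {0..}, UNIV}" and q: "q \<ge> 1" and th: "\<theta> > 0"
    and y: "y \<in> small_leb_space X q \<theta>"
  shows "small_norm X q \<theta> y = 0 \<longleftrightarrow> y = (\<lambda>k. 0)"
proof
  assume h: "small_norm X q \<theta> y = 0"
  have "y k = 0" for k
  proof (cases "k \<in> X")
    case True
    have "ennreal (exp (-\<theta>/q) * \<bar>y k\<bar>) \<le> 0"
      using small_norm_lower[OF X q th True, of y] S_fin[OF y] h by simp
    then have "exp (-\<theta>/q) * \<bar>y k\<bar> \<le> 0" by simp
    moreover have "exp (-\<theta>/q) > 0" by simp
    ultimately show ?thesis by (smt (verit) mult_pos_pos)
  next
    case False then show ?thesis using S_zero_out[OF y] by simp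
  qed
  then show "y = (\<lambda>k. 0)" by auto
next
  assume "y = (\<lambda>k. 0)"
  then show "small_norm X q \<theta> y = 0"
    using small_norm_zero[OF X q] by (simp add: small_norm_def)
qed

theorem theorem3p5:
  fixes X :: "int set" and q \<theta> :: real
  assumes "\<theta> > 0" and "1 \<le> q" and "X \<in> {{1..}, {0..}, UNIV}"
  shows "((\<lambda>k. 0) \<in> small_leb_space X q \<theta>) \<and>
    (\<forall>y\<in>small_leb_space X q \<theta>. \<forall>z\<in>small_leb_space X q \<theta>. (\<lambda>k. y k + z k) \<in> small_leb_space X q \<theta>) \<and>
    (\<forall>c::real. \<forall>y\<in>small_leb_space X q \<theta>. (\<lambda>k. c * y k) \<in> small_leb_space X q \<theta>) \<and>
    (\<forall>y\<in>small_leb_space X q \<theta>. (small_norm X q \<theta> y = 0 \<longleftrightarrow> y = (\<lambda>k. 0))) \<and>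
    (\<forall>c::real. \<forall>y\<in>small_leb_space X q \<theta>. small_norm X q \<theta> (\<lambda>k. c * y k) = \<bar>c\<bar> * small_norm X q \<theta> y) \<and>
    (\<forall>y\<in>small_leb_space X q \<theta>. \<forall>z\<in>small_leb_space X q \<theta>.
           small_norm X q \<theta> (\<lambda>k. y k + z k) \<le> small_norm X q \<theta> y + small_norm X q \<theta> z) \<and>
    (\<forall>f::nat \<Rightarrow> int \<Rightarrow> real. (\<forall>n. f n \<in> small_leb_space X q \<theta>) \<and>
           (\<forall>e>0. \<exists>M. \<forall>m\<ge>M. \<forall>n\<ge>M. small_norm X q \<theta> (\<lambda>k. f m k - f n k) < e) \<longrightarrow>
           (\<exists>y\<in>small_leb_space X q \<theta>. (\<lambda>n. small_norm X q \<theta> (\<lambda>k. f n k - y k)) \<longlonglongrightarrow> 0))"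
proof (intro conjI ballI allI impI)
  note X = assms(3) and q = assms(2) and th = assms(1)
  show "(\<lambda>k. 0) \<in> small_leb_space X q \<theta>"
    using small_norm_zero[OF X q] by (simp add: small_leb_space_def)
  show "\<And>y z. y \<in> small_leb_space X q \<theta> \<Longrightarrow> z \<in> small_leb_space X q \<theta> \<Longrightarrow> (\<lambda>k. y k + z k) \<in> small_leb_space X q \<theta>"
    using S_add[OF X q] by blast
  show "\<And>c y. y \<in> small_leb_space X q \<theta> \<Longrightarrow> (\<lambda>k. c * y k) \<in> small_leb_space X q \<theta>"
    using S_scale[OF X q] by blast
  show "\<And>y. y \<in> small_leb_space X q \<theta> \<Longrightarrow> (small_norm X q \<theta> y = 0) = (y = (\<lambda>k. 0))"
    using S_definite[OF X q th] by blast
  show "\<And>c y. y \<in> small_leb_space X q \<theta> \<Longrightarrow> small_norm X q \<theta> (\<lambda>k. c * y k) = \<bar>c\<bar> * small_norm X q \<theta> y"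
    using S_scale[OF X q] by blast
  show "\<And>y z. y \<in> small_leb_space X q \<theta> \<Longrightarrow> z \<in> small_leb_space X q \<theta> \<Longrightarrow>
      small_norm X q \<theta> (\<lambda>k. y k + z k) \<le> small_norm X q \<theta> y + small_norm X q \<theta> z"
    using S_add[OF X q] by blast
  fix f :: "nat \<Rightarrow> int \<Rightarrow> real"
  assume h: "(\<forall>n. f n \<in> small_leb_space X q \<theta>) \<and>
           (\<forall>e>0. \<exists>M. \<forall>m\<ge>M. \<forall>n\<ge>M. small_norm X q \<theta> (\<lambda>k. f m k - f n k) < e)"
  show "\<exists>y\<in>small_leb_space X q \<theta>. (\<lambda>n. small_norm X q \<theta> (\<lambda>k. f n k - y k)) \<longlonglongrightarrow> 0"
    by (rule small_complete[OF X q th]) (use h in auto)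
qed

end
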